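(* Let $S_7\subseteq G^7$ be the stabilizer group generated by $g_1=IIIXXXX$, $g_2=IXXIIXX$, $g_3=XIXIXIX$, $g_4=IIIZZZZ$, $g_5=IZZIIZZ$, $g_6=ZIZIZIZ$ (tensor signs omitted, $j$-th letter acting on qubit $j$). Define $\phi:\mathbb{F}_2^6\to G^7$ by $\phi(\epsilon_1,\dots,\epsilon_6)=Z_a X_b$, where $a=4\epsilon_1+2\epsilon_2+\epsilon_3$, $b=4\epsilon_4+2\epsilon_5+\epsilon_6$, $Z_a$ (resp. $X_b$) denotes $Z$ (resp. $X$) on qubit $a$ (resp. $b$) and identity elsewhere, and $Z_0=X_0=I^{\otimes 7}$. Then $f_{S_7}(0)=f_{S_7}(1)=1$, $f_{S_7}(2)=\tfrac{9}{16}$, $f_{S_7}(3)=\tfrac{5}{16}$, $f_{S_7}(4)=\tfrac{5}{64}$, and $f_{S_7}(5)=f_{S_7}(6)=f_{S_7}(7)=0$.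
   Context: $X=\begin{pmatrix}0&1\\1&0\end{pmatrix}$, $Y=\begin{pmatrix}0&1\\-1&0\end{pmatrix}$, $Z=\begin{pmatrix}1&0\\0&-1\end{pmatrix}$. For a stabilizer group $S\subseteq G^n$ (abelian subgroup of the $n$-qubit Pauli group not containing $-I$) with independent generators $g_1,\dots,g_r$, the syndrome of a Pauli operator $g$ is $\epsilon(g)\in\mathbb{F}_2^r$, $\epsilon_i(g)=0$ if $g$ commutes with $g_i$ and $1$ if it anticommutes. For $\{m\}\subseteq\{1,\dots,n\}$, $P^{\{m\}}$ is the set of tensor products that are one of $I,X,Y,Z$ on each qubit of $\{m\}$ and $I$ elsewhere. Given an error correcting function $\phi:\mathbb{F}_2^r\to G^n$, call a syndrome $\epsilon\in\Sigma_{\{m\}}:=\{\epsilon(g):g\in P^{\{m\}}\}$ good for $\{m\}$ if $\phi(\epsilon)g\in\{\lambda s:s\in S,\lambda\in\{\pm1,\pm i\}\}$ for every $g\in P^{\{m\}}$ with $\epsilon(g)=\epsilon$. Define, for $t=0,\dots,n$, $$f_S(t)=\binom{n}{t}^{-1}\sum_{|\{m\}|=t}\frac{|\{\epsilon\in\Sigma_{\{m\}}:\epsilon\text{ good for }\{m\}\}|}{|\Sigma_{\{m\}}|},$$ the sum over all $t$-element subsets $\{m\}$; this is the probability that a random error affecting $t$ randomly located qubits is corrected. *)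

theory Defs
  imports Complex_Main
begin

text \<open>An operator on n qubits is a complex matrix whose rows and columns are indexed by
  bit strings of length n (bit j of the string is the basis index of qubit j+1; False = |0>,
  True = |1>).  Entries at strings of any other length are 0.\<close>

type_synonym qmat1 = "bool \<Rightarrow> bool \<Rightarrow> complex"
type_synonym qmat = "bool list \<Rightarrow> bool list \<Rightarrow> complex"

definition pI :: qmat1 where "pI r c = (if r = c then 1 else 0)"
definition pX :: qmat1 where "pX r c = (if r \<noteq> c then 1 else 0)"
definition pY :: qmat1 where "pY r c = (if r = c then 0 else if r then -1 else 1)"
definition pZ :: qmat1 where "pZ r c = (if r = c then (if r then -1 else 1) else 0)"

definition tensor :: "qmat1 list \<Rightarrow> qmat" where
  "tensor Ms r c = (if length r = length Ms \<and> length c = length Ms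
      then (\<Prod>j<length Ms. (Ms ! j) (r ! j) (c ! j)) else 0)"

definition mmult :: "qmat \<Rightarrow> qmat \<Rightarrow> qmat" where
  "mmult A B r c = (\<Sum>k\<in>{k::bool list. length k = length r}. A r k * B k c)"

definition msmult :: "complex \<Rightarrow> qmat \<Rightarrow> qmat" where
  "msmult l A r c = l * A r c"

definition phases :: "complex set" where "phases = {1, -1, \<i>, -\<i>}"

definition pauli_group :: "nat \<Rightarrow> qmat set" where
  "pauli_group n = {msmult l (tensor Ms) | l Ms. l \<in> phases \<and> length Ms = n
      \<and> set Ms \<subseteq> {pI, pX, pY, pZ}}"

text \<open>The group generated by a (finite) list of n-qubit Pauli operators.  Since it is a
  subgroup of the finite group G^n, the closure under identity and products is the
  generated subgroup.\<close>
inductive_set gen_group :: "nat \<Rightarrow> qmat list \<Rightarrow> qmat set" for n gs where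
  gen_id: "tensor (replicate n pI) \<in> gen_group n gs"
| gen_gen: "g \<in> set gs \<Longrightarrow> g \<in> gen_group n gs"
| gen_mult: "a \<in> gen_group n gs \<Longrightarrow> b \<in> gen_group n gs \<Longrightarrow> mmult a b \<in> gen_group n gs"

definition syndrome :: "qmat list \<Rightarrow> qmat \<Rightarrow> bool list" where
  "syndrome gs g = map (\<lambda>h. mmult g h \<noteq> mmult h g) gs"

text \<open>P^{m}: tensor products that are I,X,Y,Z on the qubits in M (qubits numbered 1..n)
  and I elsewhere.\<close>
definition paulis_on :: "nat \<Rightarrow> nat set \<Rightarrow> qmat set" where
  "paulis_on n M = {tensor Ms | Ms. length Ms = n \<and>
      (\<forall>j<n. if Suc j \<in> M then Ms ! j \<in> {pI, pX, pY, pZ} else Ms ! j = pI)}"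

definition syndromes_on :: "nat \<Rightarrow> qmat list \<Rightarrow> nat set \<Rightarrow> bool list set" where
  "syndromes_on n gs M = syndrome gs ` paulis_on n M"

definition good :: "nat \<Rightarrow> qmat list \<Rightarrow> (bool list \<Rightarrow> qmat) \<Rightarrow> nat set \<Rightarrow> bool list \<Rightarrow> bool" where
  "good n gs \<phi> M \<epsilon> = (\<forall>g \<in> paulis_on n M. syndrome gs g = \<epsilon> \<longrightarrow>
      mmult (\<phi> \<epsilon>) g \<in> {msmult l s | l s. l \<in> phases \<and> s \<in> gen_group n gs})"

definition f_S :: "nat \<Rightarrow> qmat list \<Rightarrow> (bool list \<Rightarrow> qmat) \<Rightarrow> nat \<Rightarrow> real" where
  "f_S n gs \<phi> t = (1 / real (n choose t)) *
     (\<Sum>M\<in>{M. M \<subseteq> {1..n} \<and> card M = t}.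
        real (card {\<epsilon> \<in> syndromes_on n gs M. good n gs \<phi> M \<epsilon>})
        / real (card (syndromes_on n gs M)))"

definition letter :: "char \<Rightarrow> qmat1" where
  "letter ch = (if ch = CHR ''X'' then pX else if ch = CHR ''Y'' then pY
     else if ch = CHR ''Z'' then pZ else pI)"

definition pauli_str :: "string \<Rightarrow> qmat" where
  "pauli_str s = tensor (map letter s)"

definition steane_gens :: "qmat list" where
  "steane_gens = map pauli_str
     [''IIIXXXX'', ''IXXIIXX'', ''XIXIXIX'', ''IIIZZZZ'', ''IZZIIZZ'', ''ZIZIZIZ'']"

text \<open>Z_a (resp. X_b): Z (resp. X) on qubit a (resp. b), identity elsewhere; a = 0 gives I.\<close>
definition Zq :: "nat \<Rightarrow> qmat" where
  "Zq a = tensor (map (\<lambda>j. if Suc j = a then pZ else pI) [0..<7])"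
definition Xq :: "nat \<Rightarrow> qmat" where
  "Xq b = tensor (map (\<lambda>j. if Suc j = b then pX else pI) [0..<7])"

definition steane_phi :: "bool list \<Rightarrow> qmat" where
  "steane_phi e = mmult
     (Zq (4 * of_bool (e ! 0) + 2 * of_bool (e ! 1) + of_bool (e ! 2)))
     (Xq (4 * of_bool (e ! 3) + 2 * of_bool (e ! 4) + of_bool (e ! 5)))"

end

theory Submission
  imports Defs
begin


definition pm :: "bool \<times> bool \<Rightarrow> qmat1" where
  "pm v r c = (if c = (r \<noteq> fst v) then (if snd v \<and> r then -1 else 1) else 0)"

lemma pm_I: "pm (False,False) = pI" and pm_X: "pm (True,False) = pX"
  and pm_Y: "pm (True,True) = pY" and pm_Z: "pm (False,True) = pZ"
  by (auto simp: fun_eq_iff pm_def pI_def pX_def pY_def pZ_def)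

definition P :: "(bool \<times> bool) list \<Rightarrow> qmat" where "P v = tensor (map pm v)"

lemma tensor_Nil: "tensor [] r c = (if r = [] \<and> c = [] then 1 else 0)"
  by (simp add: tensor_def)

lemma tensor_Cons: "tensor (M # Ms) r c =
   (case r of [] \<Rightarrow> 0 | a # r' \<Rightarrow> (case c of [] \<Rightarrow> 0 | b # c' \<Rightarrow> M a b * tensor Ms r' c'))"
  by (cases r; cases c) (auto simp del: prod.lessThan_Suc simp add: tensor_def prod.lessThan_Suc_shift)

lemma tensor_Cons2: "tensor (M # Ms) (a # r) (b # c) = M a b * tensor Ms r c"
  by (simp add: tensor_Cons)

lemma tensor_Cons_Nil_r: "tensor (M # Ms) r [] = 0"
  by (cases r) (simp_all add: tensor_Cons)

lemma lists_Suc: "{k :: bool list. length k = Suc n} = (\<lambda>(b,k). b # k) ` (UNIV \<times> {k. length k = n})"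
  by (auto simp: image_iff length_Suc_conv)

lemma sum_lists_Suc: "(\<Sum>k\<in>{k :: bool list. length k = Suc n}. f k) = (\<Sum>b\<in>UNIV. \<Sum>k\<in>{k. length k = n}. f (b # k))"
proof -
  have "inj_on (\<lambda>(b,k). b # k) (UNIV \<times> {k :: bool list. length k = n})"
    by (auto simp: inj_on_def)
  then show ?thesis
    by (simp add: lists_Suc sum.reindex sum.cartesian_product case_prod_beta')
qed

definition mm1 :: "qmat1 \<Rightarrow> qmat1 \<Rightarrow> qmat1" where
  "mm1 A B a c = (\<Sum>b\<in>UNIV. A a b * B b c)"

lemma tensor_mult: "length A = length B \<Longrightarrow>
   mmult (tensor A) (tensor B) = tensor (map2 mm1 A B)"
proof (induction A B rule: list_induct2)
  case Nil
  show ?case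
  proof (intro ext)
    fix r c
    show "mmult (tensor []) (tensor []) r c = tensor (map2 mm1 [] []) r c"
      by (cases r) (auto simp: mmult_def tensor_Nil)
  qed
next
  case (Cons M A N B)
  show ?case
  proof (intro ext)
    fix r c
    show "mmult (tensor (M # A)) (tensor (N # B)) r c = tensor (map2 mm1 (M # A) (N # B)) r c"
    proof (cases r)
      case Nil
      then show ?thesis by (simp add: mmult_def tensor_Cons)
    next
      case (Cons h r')
      show ?thesis
      proof (cases c)
        case Nil
        then show ?thesis using \<open>r = h # r'\<close> by (simp add: mmult_def tensor_Cons_Nil_r)
      next
        case (Cons d c')
        have "mmult (tensor (M # A)) (tensor (N # B)) r c =
          (\<Sum>b\<in>UNIV. \<Sum>k\<in>{k. length k = length r'}. (M h b * N b d) * (tensor A r' k * tensor B k c'))"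
          using \<open>r = h # r'\<close> Cons by (simp add: mmult_def sum_lists_Suc tensor_Cons2 algebra_simps)
        also have "\<dots> = (\<Sum>b\<in>UNIV. M h b * N b d) * mmult (tensor A) (tensor B) r' c'"
          by (simp add: mmult_def sum_distrib_left sum_distrib_right sum.swap[where A=UNIV])
        also have "\<dots> = tensor (map2 mm1 (M # A) (N # B)) r c"
          using \<open>r = h # r'\<close> \<open>c = d # c'\<close> by (simp add: tensor_Cons2 Cons.IH mm1_def[of M N h d])
        finally show ?thesis .
      qed
    qed
  qed
qed

definition sc1 :: "complex \<Rightarrow> qmat1 \<Rightarrow> qmat1" where "sc1 s M a b = s * M a b"

lemma tensor_scale: "length ss = length Ms \<Longrightarrow>
  tensor (map2 sc1 ss Ms) = msmult (prod_list ss) (tensor Ms)"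
proof (induction ss Ms rule: list_induct2)
  case Nil
  then show ?case by (auto simp: fun_eq_iff msmult_def tensor_Nil)
next
  case (Cons s ss M Ms)
  show ?case
  proof (intro ext)
    fix r c
    show "tensor (map2 sc1 (s # ss) (M # Ms)) r c = msmult (prod_list (s # ss)) (tensor (M # Ms)) r c"
    proof -
      have IH': "\<And>r c. tensor (map2 sc1 ss Ms) r c = prod_list ss * tensor Ms r c"
        using Cons.IH by (simp add: msmult_def)
      show ?thesis
        by (cases r; cases c) (simp_all only: list.case tensor_Cons IH' msmult_def list.map prod_list.Cons
           zip_Cons_Cons sc1_def split, simp_all)
    qed
  qed
qed

definition xorp :: "bool \<times> bool \<Rightarrow> bool \<times> bool \<Rightarrow> bool \<times> bool" where
  "xorp u v = (fst u \<noteq> fst v, snd u \<noteq> snd v)"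
definition sg :: "bool \<times> bool \<Rightarrow> bool \<times> bool \<Rightarrow> complex" where
  "sg u v = (if fst u \<and> snd v then -1 else 1)"

lemma mm1_pm: "mm1 (pm u) (pm v) = sc1 (sg u v) (pm (xorp u v))"
  by (cases u; cases v) (auto simp: fun_eq_iff mm1_def sc1_def sg_def xorp_def pm_def UNIV_bool)

fun pr :: "(bool \<times> bool) list \<Rightarrow> (bool \<times> bool) list \<Rightarrow> bool" where
  "pr (u # us) (v # vs) = ((fst u \<and> snd v) \<noteq> pr us vs)"
| "pr _ _ = False"

definition sgnb :: "bool \<Rightarrow> complex" where "sgnb b = (if b then -1 else 1)"

lemma prod_sg: "length u = length v \<Longrightarrow> prod_list (map2 sg u v) = sgnb (pr u v)"
  by (induction u v rule: list_induct2) (auto simp: sgnb_def sg_def)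

lemma map2_mm1_pm: "length u = length v \<Longrightarrow>
  map2 mm1 (map pm u) (map pm v) = map2 sc1 (map2 sg u v) (map pm (map2 xorp u v))"
  by (induction u v rule: list_induct2) (simp_all add: mm1_pm)

lemma P_mult: "length u = length v \<Longrightarrow>
  mmult (P u) (P v) = msmult (sgnb (pr u v)) (P (map2 xorp u v))"
  unfolding P_def
  by (simp add: tensor_mult map2_mm1_pm tensor_scale prod_sg)

lemma P_nz: "P v (replicate (length v) False) (map fst v) = 1"
  by (induction v) (simp_all add: P_def tensor_Cons2 tensor_Nil pm_def)

lemma msmult_eq: "X r c \<noteq> 0 \<Longrightarrow> msmult a X = msmult b X \<Longrightarrow> a = b"
  by (drule fun_cong[where x=r], drule fun_cong[where x=c]) (simp add: msmult_def)

lemma map2_xorp_comm: "map2 xorp u v = map2 xorp v u"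
proof (induction u arbitrary: v)
  case Nil then show ?case by simp
next
  case (Cons a u) then show ?case by (cases v) (auto simp: xorp_def)
qed

lemma P_commute: "length u = length v \<Longrightarrow>
  (mmult (P u) (P v) = mmult (P v) (P u)) = (pr u v = pr v u)"
proof -
  assume l: "length u = length v"
  let ?w = "map2 xorp u v"
  have nz: "P ?w (replicate (length ?w) False) (map fst ?w) \<noteq> 0" by (simp only: P_nz) simp
  show ?thesis
    using l msmult_eq[where X="P ?w", OF nz, of "sgnb (pr u v)" "sgnb (pr v u)"]
    by (auto simp: P_mult map2_xorp_comm[of v u] sgnb_def split: if_splits)
qed

lemma msmult_msmult: "msmult a (msmult b X) = msmult (a * b) X"
  by (simp add: fun_eq_iff msmult_def)

lemma msmult_1: "msmult 1 X = X"
  by (simp add: fun_eq_iff msmult_def)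

lemma mmult_msmult: "mmult (msmult a X) (msmult b Y) = msmult (a * b) (mmult X Y)"
  by (simp add: fun_eq_iff msmult_def mmult_def sum_distrib_left algebra_simps)

lemma P_Cons: "P (a # y) r c = (case r of [] \<Rightarrow> 0 | h # r' \<Rightarrow> (case c of [] \<Rightarrow> 0 | k # c' \<Rightarrow> pm a h k * P y r' c'))"
  by (simp add: P_def tensor_Cons split: list.split)

lemma P_inj: "length y = length y' \<Longrightarrow> l \<noteq> 0 \<Longrightarrow> msmult l (P y) = msmult l' (P y') \<Longrightarrow> y = y' \<and> l = l'"
proof (induction y y' arbitrary: l l' rule: list_induct2)
  case Nil
  then show ?case
    using fun_cong[OF fun_cong[OF Nil(2), of "[]"], of "[]"]
    by (simp add: msmult_def P_def tensor_Nil)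
next
  case (Cons a y b y')
  have eq: "l * (pm a h k * P y r c) = l' * (pm b h k * P y' r c)" for h k r c
    using fun_cong[OF fun_cong[OF Cons(4), of "h # r"], of "k # c"] by (simp add: msmult_def P_Cons)
  have "msmult l (P y) = msmult (l' * pm b False (fst a)) (P y')"
    using eq[of False "fst a"] by (simp add: fun_eq_iff msmult_def pm_def)
  with Cons.IH Cons.prems(1) have yy: "y = y'" and ll: "l = l' * pm b False (fst a)" by blast+
  have fa: "fst a = fst b"
    using ll Cons.prems(1) by (auto simp: pm_def split: if_splits)
  have l1: "l = l'" using ll fa by (simp add: pm_def)
  have "l * pm a True (\<not> fst a) = l' * pm b True (\<not> fst a)"
    using eq[of True "\<not> fst a" "replicate (length y) False" "map fst y"] yy by (simp add: P_nz)
  then have "snd a = snd b" using l1 fa Cons.prems(1) by (auto simp: pm_def split: if_splits)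
  with fa yy l1 show ?case by (simp add: prod_eq_iff)
qed



definition z7 :: "bool list" where "z7 = [False, False, False, False, False, False, False]"

lemma rep7: "replicate 7 x = [x, x, x, x, x, x, x]" by (simp add: numeral_eq_Suc)
definition p1 :: "bool list" where "p1 = [False, False, False, True, True, True, True]"
definition p2 :: "bool list" where "p2 = [False, True, True, False, False, True, True]"
definition p3 :: "bool list" where "p3 = [True, False, True, False, True, False, True]"

definition gv :: "(bool \<times> bool) list list" where
  "gv = [zip p1 z7, zip p2 z7, zip p3 z7, zip z7 p1, zip z7 p2, zip z7 p3]"

lemma pm_F: "pm (False, b) = (if b then pZ else pI)" by (cases b) (simp_all add: pm_I pm_Z)
lemma pm_T: "pm (True, b) = (if b then pY else pX)" by (cases b) (simp_all add: pm_X pm_Y)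

lemma steane_gens_eq: "steane_gens = map P gv"
  by (simp add: steane_gens_def pauli_str_def P_def gv_def z7_def p1_def p2_def p3_def
      letter_def pm_F pm_T)

definition xl :: "bool list \<Rightarrow> bool list \<Rightarrow> bool list" where "xl x y = map2 (\<noteq>) x y"

definition C1l :: "bool list list" where
  "C1l = [[False, False, False, False, False, False, False],
          [True, False, True, False, True, False, True],
          [False, True, True, False, False, True, True],
          [True, True, False, False, True, True, False],
          [False, False, False, True, True, True, True],
          [True, False, True, True, False, True, False],
          [False, True, True, True, True, False, False],
          [True, True, False, True, False, False, True]]"

lemma C1l_len: "x \<in> set C1l \<Longrightarrow> length x = 7"
  by (auto simp: C1l_def)

lemma C1l_closed: "x \<in> set C1l \<Longrightarrow> y \<in> set C1l \<Longrightarrow> xl x y \<in> set C1l"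
  unfolding C1l_def by (simp add: xl_def) (elim disjE; simp)

definition Cset :: "(bool \<times> bool) list set" where
  "Cset = {zip x z | x z. x \<in> set C1l \<and> z \<in> set C1l}"

lemma map2_xorp_zip: "length x = length z \<Longrightarrow> length x' = length z' \<Longrightarrow> length x = length x' \<Longrightarrow>
  map2 xorp (zip x z) (zip x' z') = zip (xl x x') (xl z z')"
proof (induction x arbitrary: z x' z')
  case Nil then show ?case by (simp add: xl_def)
next
  case (Cons a x)
  then show ?case
    by (cases z; cases x'; cases z') (auto simp: xl_def xorp_def)
qed

lemma P_rep: "tensor (replicate n pI) = P (zip (replicate n False) (replicate n False))"
  by (simp add: P_def pm_I zip_replicate)

lemma gen_A: "s \<in> gen_group 7 steane_gens \<Longrightarrow>
  \<exists>\<sigma> y. \<sigma> \<in> {1, -1} \<and> y \<in> Cset \<and> s = msmult \<sigma> (P y)"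
proof (induction rule: gen_group.induct)
  case gen_id
  have "replicate 7 False \<in> set C1l" by (simp add: C1l_def rep7)
  then have "zip (replicate 7 False) (replicate 7 False) \<in> Cset" unfolding Cset_def by blast
  then show ?case
    by (auto simp only: P_rep msmult_1 intro!: exI[of _ 1])
next
  case (gen_gen g)
  then obtain v where v: "v \<in> set gv" "g = P v" by (auto simp: steane_gens_eq)
  have mem: "p1 \<in> set C1l" "p2 \<in> set C1l" "p3 \<in> set C1l" "z7 \<in> set C1l"
    by (simp_all add: C1l_def z7_def p1_def p2_def p3_def)
  have "v \<in> Cset" using v(1) mem
    unfolding gv_def Cset_def by auto
  then show ?case using v by (auto simp: msmult_1 intro!: exI[of _ 1])
next
  case (gen_mult a b)
  then obtain \<sigma> y \<tau> y' where a: "\<sigma> \<in> {1,-1}" "y \<in> Cset" "a = msmult \<sigma> (P y)"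
    and b: "\<tau> \<in> {1,-1}" "y' \<in> Cset" "b = msmult \<tau> (P y')" by blast
  from a(2) obtain x z where y: "y = zip x z" "x \<in> set C1l" "z \<in> set C1l" by (auto simp: Cset_def)
  from b(2) obtain x' z' where y': "y' = zip x' z'" "x' \<in> set C1l" "z' \<in> set C1l" by (auto simp: Cset_def)
  have len: "length x = 7" "length z = 7" "length x' = 7" "length z' = 7"
    using y y' C1l_len by auto
  have "mmult a b = msmult (\<sigma> * \<tau> * sgnb (pr y y')) (P (zip (xl x x') (xl z z')))"
    using len by (simp add: a(3) b(3) mmult_msmult P_mult y y' map2_xorp_zip msmult_msmult)
  moreover have "zip (xl x x') (xl z z') \<in> Cset"
    using C1l_closed y y' by (auto simp: Cset_def)
  moreover have "\<sigma> * \<tau> * sgnb (pr y y') \<in> {1, -1}"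
    using a(1) b(1) by (auto simp: sgnb_def)
  ultimately show ?case by blast
qed

definition cx :: "bool \<Rightarrow> (bool \<times> bool) list \<Rightarrow> (bool \<times> bool) list \<Rightarrow> (bool \<times> bool) list" where
  "cx b y v = (if b then map2 xorp y v else y)"

definition Tset :: "(bool \<times> bool) list set" where
  "Tset = {y. length y = 7 \<and> (\<exists>\<sigma>\<in>{1,-1}. msmult \<sigma> (P y) \<in> gen_group 7 steane_gens)}"

lemma gv_len: "v \<in> set gv \<Longrightarrow> length v = 7"
  by (auto simp: gv_def z7_def p1_def p2_def p3_def)

lemma T_step: "y \<in> Tset \<Longrightarrow> v \<in> set gv \<Longrightarrow> cx b y v \<in> Tset"
proof (cases b)
  case False
  assume "y \<in> Tset" then show ?thesis using False by (simp add: cx_def)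
next
  case True
  assume y: "y \<in> Tset" and v: "v \<in> set gv"
  from y obtain \<sigma> where s: "\<sigma> \<in> {1,-1}" "msmult \<sigma> (P y) \<in> gen_group 7 steane_gens" and ly: "length y = 7"
    by (auto simp: Tset_def)
  have "P v \<in> gen_group 7 steane_gens" using v by (auto simp: steane_gens_eq intro: gen_gen)
  then have "mmult (msmult \<sigma> (P y)) (msmult 1 (P v)) \<in> gen_group 7 steane_gens"
    using s(2) by (simp add: msmult_1 gen_mult)
  also have "mmult (msmult \<sigma> (P y)) (msmult 1 (P v)) = msmult (\<sigma> * sgnb (pr y v)) (P (map2 xorp y v))"
    using ly gv_len[OF v] by (simp add: mmult_msmult P_mult msmult_msmult)
  finally have "msmult (\<sigma> * sgnb (pr y v)) (P (map2 xorp y v)) \<in> gen_group 7 steane_gens" .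
  moreover have "\<sigma> * sgnb (pr y v) \<in> {1,-1}" using s(1) by (auto simp: sgnb_def)
  moreover have "length (map2 xorp y v) = 7" using ly gv_len[OF v] by simp
  ultimately show ?thesis using True by (auto simp: Tset_def cx_def)
qed

lemma T_base: "zip z7 z7 \<in> Tset"
proof -
  have "msmult 1 (P (zip z7 z7)) \<in> gen_group 7 steane_gens"
    using gen_id[of 7 steane_gens] by (simp add: P_def pm_I msmult_1 z7_def rep7)
  then show ?thesis by (auto simp: Tset_def z7_def)
qed

definition lin3 :: "bool \<Rightarrow> bool \<Rightarrow> bool \<Rightarrow> bool list" where
  "lin3 a b c = xl (xl (xl z7 (if a then p1 else z7)) (if b then p2 else z7)) (if c then p3 else z7)"

lemma C1l_lin3: "C1l = map (\<lambda>(a,b,c). lin3 a b c) [(False,False,False), (False,False,True),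
   (False,True,False), (False,True,True), (True,False,False), (True,False,True), (True,True,False), (True,True,True)]"
  by (simp add: C1l_def lin3_def xl_def z7_def p1_def p2_def p3_def)

lemma zip_lin3: "zip (lin3 a b c) (lin3 d e f) =
  cx f (cx e (cx d (cx c (cx b (cx a (zip z7 z7) (gv!0)) (gv!1)) (gv!2)) (gv!3)) (gv!4)) (gv!5)"
  by (cases a; cases b; cases c; cases d; cases e; cases f)
    (simp_all add: lin3_def xl_def z7_def p1_def p2_def p3_def cx_def gv_def xorp_def)

lemma gen_B: "x \<in> set C1l \<Longrightarrow> z \<in> set C1l \<Longrightarrow> zip x z \<in> Tset"
proof -
  assume "x \<in> set C1l" "z \<in> set C1l"
  then obtain a b c d e f where "x = lin3 a b c" "z = lin3 d e f"
    unfolding C1l_lin3 by auto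
  moreover have "gv ! i \<in> set gv" if "i < 6" for i using that by (intro nth_mem) (simp add: gv_def)
  ultimately show ?thesis
    by (simp only: zip_lin3) (intro T_step T_base; simp)
qed

lemma phases_mult: "s \<in> {1,-1} \<Longrightarrow> \<sigma> \<in> {1,-1} \<Longrightarrow> s * \<sigma> \<in> phases"
  by (auto simp: phases_def)

lemma memS: "length y = 7 \<Longrightarrow> s \<in> {1,-1} \<Longrightarrow>
  (msmult s (P y) \<in> {msmult l s' | l s'. l \<in> phases \<and> s' \<in> gen_group 7 steane_gens}) = (y \<in> Cset)"
proof
  assume ly: "length y = 7" and s: "s \<in> {1,-1}"
  assume "msmult s (P y) \<in> {msmult l s' | l s'. l \<in> phases \<and> s' \<in> gen_group 7 steane_gens}"
  then obtain l s' where "l \<in> phases" "s' \<in> gen_group 7 steane_gens" "msmult s (P y) = msmult l s'" by blast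
  moreover from gen_A[OF this(2)] obtain \<sigma> y' where "\<sigma> \<in> {1,-1}" "y' \<in> Cset" "s' = msmult \<sigma> (P y')"
    by blast
  ultimately have eq: "msmult s (P y) = msmult (l * \<sigma>) (P y')" by (simp add: msmult_msmult)
  have "length y' = 7" using \<open>y' \<in> Cset\<close> C1l_len by (auto simp: Cset_def)
  then have "y = y'" using P_inj[OF _ _ eq] ly s by auto
  then show "y \<in> Cset" using \<open>y' \<in> Cset\<close> by simp
next
  assume ly: "length y = 7" and s: "s \<in> {1,-1}" and "y \<in> Cset"
  then obtain x z where "y = zip x z" "x \<in> set C1l" "z \<in> set C1l" by (auto simp: Cset_def)
  then have "y \<in> Tset" using gen_B by simp
  then obtain \<sigma> where sg: "\<sigma> \<in> {1,-1}" "msmult \<sigma> (P y) \<in> gen_group 7 steane_gens"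
    by (auto simp: Tset_def)
  have "msmult s (P y) = msmult (s * \<sigma>) (msmult \<sigma> (P y))"
    using sg(1) by (auto simp: msmult_msmult)
  then show "msmult s (P y) \<in> {msmult l s' | l s'. l \<in> phases \<and> s' \<in> gen_group 7 steane_gens}"
    using sg phases_mult[OF s sg(1)] by blast
qed



fun dot :: "bool list \<Rightarrow> bool list \<Rightarrow> bool" where
  "dot (a # as) (b # bs) = ((a \<and> b) \<noteq> dot as bs)"
| "dot _ _ = False"

lemma pr_zip: "length x = length z \<Longrightarrow> length p = length q \<Longrightarrow> length x = length p \<Longrightarrow>
  pr (zip x z) (zip p q) = dot x q"
proof (induction x arbitrary: z p q)
  case Nil then show ?case by simp
next
  case (Cons a x) then show ?case by (cases z; cases p; cases q) auto
qed

lemma dot_comm: "dot x y = dot y x"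
proof (induction x arbitrary: y)
  case Nil then show ?case by (cases y) auto
next
  case (Cons a x) then show ?case by (cases y) auto
qed

lemma dot_repF: "dot w (replicate n False) = False"
proof (induction w arbitrary: n)
  case Nil then show ?case by simp
next
  case (Cons a w) then show ?case by (cases n) auto
qed

definition hs :: "bool list \<Rightarrow> bool list" where "hs w = [dot p1 w, dot p2 w, dot p3 w]"

lemma syn_eq: "length x = 7 \<Longrightarrow> length z = 7 \<Longrightarrow>
  syndrome steane_gens (P (zip x z)) = hs z @ hs x"
proof -
  assume l: "length x = 7" "length z = 7"
  have c: "\<And>p q. length p = 7 \<Longrightarrow> length q = 7 \<Longrightarrow>
     (mmult (P (zip x z)) (P (zip p q)) \<noteq> mmult (P (zip p q)) (P (zip x z))) = (dot x q \<noteq> dot p z)"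
    using l by (simp add: P_commute pr_zip)
  have len: "length p1 = 7" "length p2 = 7" "length p3 = 7" "length z7 = 7"
    by (simp_all add: p1_def p2_def p3_def z7_def)
  have z: "dot w z7 = False" "dot z7 w = False" for w
    using dot_repF[of w 7] dot_comm[of w z7] by (simp_all add: z7_def rep7)
  show ?thesis
    by (simp add: syndrome_def steane_gens_eq gv_def c len hs_def z dot_comm)
qed

definition ev :: "nat \<Rightarrow> bool list" where "ev a = map (\<lambda>j. Suc j = a) [0..<7]"

lemma upt7: "[0..<7] = [0::nat, 1, 2, 3, 4, 5, 6]" by (simp add: upt_rec)

lemma ev_len: "length (ev a) = 7" by (simp add: ev_def)

lemma Zq_eq: "Zq a = P (zip z7 (ev a))"
  by (simp add: Zq_def P_def ev_def upt7 z7_def pm_F)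

lemma Xq_eq: "Xq a = P (zip (ev a) z7)"
  by (simp add: Xq_def P_def ev_def upt7 z7_def pm_F pm_T pm_I)

lemma xl_repF: "length w = n \<Longrightarrow> xl (replicate n False) w = w \<and> xl w (replicate n False) = w"
proof (induction w arbitrary: n)
  case Nil then show ?case by (simp add: xl_def)
next
  case (Cons a w) then show ?case by (cases n) (auto simp: xl_def)
qed

lemma xl_z7: "length w = 7 \<Longrightarrow> xl z7 w = w \<and> xl w z7 = w"
  using xl_repF[of w 7] by (simp add: z7_def rep7)

definition dec :: "bool list \<Rightarrow> bool list" where
  "dec s = ev (4 * of_bool (s ! 0) + 2 * of_bool (s ! 1) + of_bool (s ! 2))"

lemma dec_len: "length (dec s) = 7" by (simp add: dec_def ev_len)

lemma len7: "length z7 = 7" "length p1 = 7" "length p2 = 7" "length p3 = 7"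
  by (simp_all add: p1_def p2_def p3_def z7_def)

lemma phi_eq: "steane_phi (hs z @ hs x) = P (zip (dec (hs x)) (dec (hs z)))"
proof -
  have "steane_phi (hs z @ hs x) = mmult (P (zip z7 (dec (hs z)))) (P (zip (dec (hs x)) z7))"
    by (simp add: steane_phi_def Zq_eq Xq_eq hs_def dec_def)
  also have "\<dots> = P (zip (dec (hs x)) (dec (hs z)))"
    using dec_len[of "hs x"] dec_len[of "hs z"] xl_z7[of "dec (hs x)"] xl_z7[of "dec (hs z)"]
    by (simp add: P_mult len7 pr_zip map2_xorp_zip dot_repF[of _ 7, folded rep7, folded z7_def[unfolded rep7[symmetric]]] sgnb_def msmult_1)
  finally show ?thesis .
qed

lemma zip_Cset: "length x = 7 \<Longrightarrow> length z = 7 \<Longrightarrow> (zip x z \<in> Cset) = (x \<in> set C1l \<and> z \<in> set C1l)"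
proof
  assume l: "length x = 7" "length z = 7" and "zip x z \<in> Cset"
  then obtain x' z' where e: "zip x z = zip x' z'" "x' \<in> set C1l" "z' \<in> set C1l"
    by (auto simp: Cset_def)
  have "length x' = 7" "length z' = 7" using e C1l_len by auto
  then have "x = x'" "z = z'"
    using arg_cong[OF e(1), of "map fst"] arg_cong[OF e(1), of "map snd"] l by simp_all
  then show "x \<in> set C1l \<and> z \<in> set C1l" using e by simp
qed (auto simp: Cset_def)

definition okv :: "bool list \<Rightarrow> bool" where "okv w = (xl (dec (hs w)) w \<in> set C1l)"

definition inS :: "qmat \<Rightarrow> bool" where
  "inS A = (A \<in> {msmult l s' | l s'. l \<in> phases \<and> s' \<in> gen_group 7 steane_gens})"

lemma good_pt: "length x = 7 \<Longrightarrow> length z = 7 \<Longrightarrow>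
  inS (mmult (steane_phi (hs z @ hs x)) (P (zip x z))) = (okv x \<and> okv z)"
proof -
  assume l: "length x = 7" "length z = 7"
  let ?a = "xl (dec (hs x)) x" and ?b = "xl (dec (hs z)) z"
  have la: "length ?a = 7" "length ?b = 7" using l dec_len by (simp_all add: xl_def)
  have "mmult (steane_phi (hs z @ hs x)) (P (zip x z)) =
        msmult (sgnb (pr (zip (dec (hs x)) (dec (hs z))) (zip x z))) (P (zip ?a ?b))"
    using l dec_len[of "hs x"] dec_len[of "hs z"] by (simp add: phi_eq P_mult map2_xorp_zip)
  moreover have "sgnb (pr (zip (dec (hs x)) (dec (hs z))) (zip x z)) \<in> {1, -1}"
    by (simp add: sgnb_def)
  ultimately show ?thesis
    unfolding inS_def using memS[of "zip ?a ?b"] la by (simp add: zip_Cset okv_def)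
qed

definition VM :: "nat set \<Rightarrow> bool list set" where
  "VM M = {w. length w = 7 \<and> (\<forall>j<7. w ! j \<longrightarrow> Suc j \<in> M)}"

lemma pm_cases: "pm v \<in> {pI, pX, pY, pZ}"
proof -
  obtain a b where "v = (a, b)" by fastforce
  then show ?thesis by (cases a; cases b) (simp_all add: pm_I pm_X pm_Y pm_Z)
qed

lemma paulis_eq: "paulis_on 7 M = (\<lambda>(x, z). P (zip x z)) ` (VM M \<times> VM M)"
proof (intro equalityI subsetI)
  fix g assume "g \<in> paulis_on 7 M"
  then obtain Ms where g: "g = tensor Ms" "length Ms = 7"
    and c: "\<forall>j<7. if Suc j \<in> M then Ms ! j \<in> {pI, pX, pY, pZ} else Ms ! j = pI"
    by (auto simp: paulis_on_def)
  have "\<forall>j<(7::nat). \<exists>v. Ms ! j = pm v \<and> (Suc j \<notin> M \<longrightarrow> v = (False, False))"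
  proof (intro allI impI)
    fix j :: nat assume "j < 7"
    with c have "if Suc j \<in> M then Ms ! j \<in> {pI, pX, pY, pZ} else Ms ! j = pI" by blast
    then show "\<exists>v. Ms ! j = pm v \<and> (Suc j \<notin> M \<longrightarrow> v = (False, False))"
      by (cases "Suc j \<in> M") (auto simp: pm_I[symmetric] pm_X[symmetric] pm_Y[symmetric] pm_Z[symmetric])
  qed
  then obtain f where f: "\<forall>j<(7::nat). Ms ! j = pm (f j) \<and> (Suc j \<notin> M \<longrightarrow> f j = (False, False))"
    by metis
  define x where "x = map (\<lambda>j. fst (f j)) [0..<7]"
  define z where "z = map (\<lambda>j. snd (f j)) [0..<7]"
  have "Ms = map pm (zip x z)"
    using f g(2) by (intro nth_equalityI) (auto simp: x_def z_def)
  moreover have "x \<in> VM M" "z \<in> VM M"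
    using f by (auto simp: VM_def x_def z_def)
  ultimately show "g \<in> (\<lambda>(x, z). P (zip x z)) ` (VM M \<times> VM M)"
    using g by (auto simp: P_def)
next
  fix g assume "g \<in> (\<lambda>(x, z). P (zip x z)) ` (VM M \<times> VM M)"
  then obtain x z where g: "g = P (zip x z)" "x \<in> VM M" "z \<in> VM M" by auto
  have "\<forall>j<(7::nat). if Suc j \<in> M then map pm (zip x z) ! j \<in> {pI, pX, pY, pZ} else map pm (zip x z) ! j = pI"
  proof (intro allI impI)
    fix j :: nat assume j: "j < 7"
    show "if Suc j \<in> M then map pm (zip x z) ! j \<in> {pI, pX, pY, pZ} else map pm (zip x z) ! j = pI"
    proof (cases "Suc j \<in> M")
      case True then show ?thesis using j g(2,3) pm_cases by (simp add: VM_def)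
    next
      case False
      then have "\<not> x ! j" "\<not> z ! j" using j g(2,3) by (auto simp: VM_def)
      then show ?thesis using False j g(2,3) by (simp add: VM_def pm_I)
    qed
  qed
  moreover have "length (map pm (zip x z)) = 7" using g by (simp add: VM_def)
  ultimately show "g \<in> paulis_on 7 M"
    unfolding paulis_on_def using g(1) P_def by blast
qed



lemma hs_len: "length (hs w) = 3" by (simp add: hs_def)

lemma VM_len: "w \<in> VM M \<Longrightarrow> length w = 7" by (simp add: VM_def)

definition app2 :: "bool list \<times> bool list \<Rightarrow> bool list" where "app2 q = fst q @ snd q"

lemma synd_on: "syndromes_on 7 steane_gens M = app2 ` (hs ` VM M \<times> hs ` VM M)"
proof -
  have "syndromes_on 7 steane_gens M = (\<lambda>(x, z). hs z @ hs x) ` (VM M \<times> VM M)"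
    unfolding syndromes_on_def paulis_eq image_image
    by (intro image_cong refl) (auto simp: syn_eq VM_len)
  also have "\<dots> = app2 ` (hs ` VM M \<times> hs ` VM M)"
  proof (intro equalityI subsetI)
    fix e assume "e \<in> (\<lambda>(x, z). hs z @ hs x) ` (VM M \<times> VM M)"
    then obtain x z where "x \<in> VM M" "z \<in> VM M" "e = hs z @ hs x" by auto
    then show "e \<in> app2 ` (hs ` VM M \<times> hs ` VM M)"
      by (intro rev_image_eqI[of "(hs z, hs x)"]) (auto simp: app2_def)
  next
    fix e assume "e \<in> app2 ` (hs ` VM M \<times> hs ` VM M)"
    then obtain x z where "x \<in> VM M" "z \<in> VM M" "e = hs z @ hs x" by (auto simp: app2_def)
    then show "e \<in> (\<lambda>(x, z). hs z @ hs x) ` (VM M \<times> VM M)"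
      by (intro rev_image_eqI[of "(x, z)"]) auto
  qed
  finally show ?thesis .
qed

definition g1 :: "nat set \<Rightarrow> bool list \<Rightarrow> bool" where
  "g1 M s = (\<forall>w\<in>VM M. hs w = s \<longrightarrow> okv w)"

lemma app_eq3: "length a = 3 \<Longrightarrow> length c = 3 \<Longrightarrow> (a @ b = c @ d) = (a = c \<and> b = d)"
  by simp

lemma good_iff: "s1 \<in> hs ` VM M \<Longrightarrow> s2 \<in> hs ` VM M \<Longrightarrow>
  good 7 steane_gens steane_phi M (s1 @ s2) = (g1 M s1 \<and> g1 M s2)"
proof -
  assume s1: "s1 \<in> hs ` VM M" and s2: "s2 \<in> hs ` VM M"
  have "good 7 steane_gens steane_phi M (s1 @ s2) =
     (\<forall>x\<in>VM M. \<forall>z\<in>VM M. hs z = s1 \<and> hs x = s2 \<longrightarrow> okv x \<and> okv z)"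
  proof -
    have "\<And>x z. x \<in> VM M \<Longrightarrow> z \<in> VM M \<Longrightarrow>
      (syndrome steane_gens (P (zip x z)) = s1 @ s2 \<longrightarrow>
        mmult (steane_phi (s1 @ s2)) (P (zip x z)) \<in> {msmult l s |l s. l \<in> phases \<and> s \<in> gen_group 7 steane_gens})
      = (hs z = s1 \<and> hs x = s2 \<longrightarrow> okv x \<and> okv z)"
    proof -
      fix x z assume x: "x \<in> VM M" and z: "z \<in> VM M"
      have l3: "length s1 = 3" using s1 hs_len by auto
      have e: "(hs z @ hs x = s1 @ s2) = (hs z = s1 \<and> hs x = s2)"
        using app_eq3[OF hs_len l3] by simp
      show "?thesis x z"
        using e good_pt[OF VM_len[OF x] VM_len[OF z]]
        by (auto simp: syn_eq VM_len[OF x] VM_len[OF z] inS_def)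
    qed
    then show ?thesis
      unfolding good_def paulis_eq by (auto simp: ball_Un)
  qed
  also have "\<dots> = (g1 M s1 \<and> g1 M s2)"
    using s1 s2 unfolding g1_def by blast
  finally show ?thesis .
qed

lemma ratio: "real (card {e \<in> syndromes_on 7 steane_gens M. good 7 steane_gens steane_phi M e}) /
     real (card (syndromes_on 7 steane_gens M)) =
   (real (card {s \<in> hs ` VM M. g1 M s}) / real (card (hs ` VM M)))^2"
proof -
  let ?A = "hs ` VM M" let ?G = "{s \<in> hs ` VM M. g1 M s}"
  have inj: "inj_on app2 (?A \<times> ?A)"
    by (auto simp: inj_on_def app2_def hs_len)
  have inj2: "inj_on app2 (?G \<times> ?G)"
    by (rule inj_on_subset[OF inj]) auto
  have "{e \<in> syndromes_on 7 steane_gens M. good 7 steane_gens steane_phi M e} = app2 ` (?G \<times> ?G)"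
  proof (intro equalityI subsetI)
    fix e assume "e \<in> {e \<in> syndromes_on 7 steane_gens M. good 7 steane_gens steane_phi M e}"
    then have e1: "e \<in> app2 ` (?A \<times> ?A)" and e2: "good 7 steane_gens steane_phi M e"
      unfolding synd_on by auto
    from e1 obtain q where q: "q \<in> ?A \<times> ?A" "e = app2 q" by blast
    define a b where "a = fst q" and "b = snd q"
    have ab: "a \<in> ?A" "b \<in> ?A" "e = a @ b" "good 7 steane_gens steane_phi M e"
      using q e2 by (auto simp: a_def b_def app2_def)
    then have "g1 M a" "g1 M b" using good_iff by auto
    with ab show "e \<in> app2 ` (?G \<times> ?G)"
      by (intro rev_image_eqI[of "(a, b)"]) (auto simp: app2_def)
  next
    fix e assume "e \<in> app2 ` (?G \<times> ?G)"
    then obtain q where q: "q \<in> ?G \<times> ?G" "e = app2 q" by blast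
    define a b where "a = fst q" and "b = snd q"
    have ab: "a \<in> ?A" "b \<in> ?A" "e = a @ b" "g1 M a" "g1 M b"
      using q by (auto simp: a_def b_def app2_def)
    then have "good 7 steane_gens steane_phi M e" using good_iff by auto
    moreover have "e \<in> syndromes_on 7 steane_gens M"
      unfolding synd_on using ab by (intro rev_image_eqI[of "(a, b)"]) (auto simp: app2_def)
    ultimately show "e \<in> {e \<in> syndromes_on 7 steane_gens M. good 7 steane_gens steane_phi M e}" by simp
  qed
  then have c1: "card {e \<in> syndromes_on 7 steane_gens M. good 7 steane_gens steane_phi M e} = card ?G * card ?G"
    using inj2 by (simp add: card_image card_cartesian_product)
  have c2: "card (syndromes_on 7 steane_gens M) = card ?A * card ?A"
    unfolding synd_on using inj by (simp add: card_image card_cartesian_product)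
  show ?thesis
    unfolding c1 c2 by (simp add: power2_eq_square)
qed



fun par :: "bool list \<Rightarrow> bool" where "par [] = False" | "par (a # w) = (a \<noteq> par w)"

fun hsc :: "bool list list \<Rightarrow> bool list \<Rightarrow> bool list" where
  "hsc (c # cs) (b # w) = (if b then xl c (hsc cs w) else hsc cs w)"
| "hsc _ _ = [False, False, False]"

fun Ls :: "bool list list \<Rightarrow> bool list \<Rightarrow> (bool list \<times> bool) list" where
  "Ls (c # cs) (b # m) = (if b then remdups (Ls cs m @ map (\<lambda>(s, p). (xl c s, \<not> p)) (Ls cs m)) else Ls cs m)"
| "Ls _ _ = [([False, False, False], False)]"

definition cols :: "bool list list" where
  "cols = [[False,False,True],[False,True,False],[False,True,True],[True,False,False],[True,False,True],[True,True,False],[True,True,True]]"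

definition Wm :: "bool list \<Rightarrow> bool list set" where
  "Wm m = {w. length w = length m \<and> (\<forall>j<length m. w ! j \<longrightarrow> m ! j)}"

lemma Wm_Cons: "Wm (b # m) = Cons False ` Wm m \<union> (if b then Cons True ` Wm m else {})"
proof (intro equalityI subsetI)
  fix w assume "w \<in> Wm (b # m)"
  then obtain a w' where w: "w = a # w'" "length w' = length m" "a \<longrightarrow> b" "\<forall>j<length m. w' ! j \<longrightarrow> m ! j"
    unfolding Wm_def by (cases w) (auto simp: All_less_Suc2)
  then show "w \<in> Cons False ` Wm m \<union> (if b then Cons True ` Wm m else {})"
    by (cases a) (auto simp: Wm_def)
next
  fix w assume "w \<in> Cons False ` Wm m \<union> (if b then Cons True ` Wm m else {})"
  then show "w \<in> Wm (b # m)"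
    by (cases b) (auto simp: Wm_def All_less_Suc2)
qed

lemma Wm_Nil: "Wm [] = {[]}" by (auto simp: Wm_def)

lemma Ls_set: "length cs = length m \<Longrightarrow>
  set (Ls cs m) = (\<lambda>w. (hsc cs w, par w)) ` Wm m"
proof (induction cs m rule: list_induct2)
  case Nil then show ?case by (simp add: Wm_Nil)
next
  case (Cons c cs b m)
  show ?case
    using Cons.IH by (cases b) (auto simp: Wm_Cons image_Un image_image)
qed

lemma hsc_dot: "length cs = length w \<Longrightarrow> (\<forall>c\<in>set cs. length c = 3) \<Longrightarrow>
  hsc cs w = [dot (map (\<lambda>c. c ! 0) cs) w, dot (map (\<lambda>c. c ! 1) cs) w, dot (map (\<lambda>c. c ! 2) cs) w]"
proof (induction cs w rule: list_induct2)
  case Nil then show ?case by simp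
next
  case (Cons c cs b w)
  then have "length c = 3" by simp
  then obtain c0 c1 c2 where "c = [c0, c1, c2]"
    by (metis (no_types) length_0_conv length_Suc_conv numeral_3_eq_3)
  with Cons show ?case by (cases b) (auto simp: xl_def)
qed

lemma hsc_hs: "length w = 7 \<Longrightarrow> hsc cols w = hs w"
  by (subst hsc_dot) (auto simp: cols_def hs_def p1_def p2_def p3_def)

lemma dec_tab: "dec [a, b, c] = [\<not> a \<and> \<not> b \<and> c, \<not> a \<and> b \<and> \<not> c, \<not> a \<and> b \<and> c,
   a \<and> \<not> b \<and> \<not> c, a \<and> \<not> b \<and> c, a \<and> b \<and> \<not> c, a \<and> b \<and> c]"
  by (cases a; cases b; cases c) (simp_all add: dec_def ev_def upt7)

lemma n7: "List.n_lists 7 xs = List.n_lists (Suc (Suc (Suc (Suc (Suc (Suc (Suc 0))))))) xs"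
  by (simp add: numeral_eq_Suc)

lemma okv_all: "\<forall>w\<in>set (List.n_lists 7 [False, True]). okv w = (par w = (hs w \<noteq> [False, False, False]))"
  unfolding n7 by (simp add: okv_def hs_def dec_tab C1l_def xl_def p1_def p2_def p3_def)



lemma okv_char: "length w = 7 \<Longrightarrow> okv w = (par w = (hs w \<noteq> [False, False, False]))"
proof -
  assume "length w = 7"
  moreover have "set w \<subseteq> {False, True}" by auto
  ultimately show ?thesis using okv_all by (simp add: set_n_lists)
qed

definition Mset :: "bool list \<Rightarrow> nat set" where "Mset m = {Suc j | j. j < length m \<and> m ! j}"

lemma Mset_mem: "(Suc j \<in> Mset m) = (j < length m \<and> m ! j)"
  by (auto simp: Mset_def)

lemma VM_Mset: "length m = 7 \<Longrightarrow> VM (Mset m) = Wm m"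
  by (auto simp: VM_def Wm_def Mset_mem)

definition Hq :: "nat set \<Rightarrow> real" where
  "Hq M = (real (card {s \<in> hs ` VM M. g1 M s}) / real (card (hs ` VM M)))^2"

definition Fm :: "bool list \<Rightarrow> real" where
  "Fm m = (let L = Ls cols m; A = remdups (map fst L);
     G = filter (\<lambda>s. \<forall>q \<in> set L. fst q = s \<longrightarrow> snd q = (s \<noteq> [False,False,False])) A
     in (real (length G) / real (length A))^2)"

lemma Hq_Fm: "length m = 7 \<Longrightarrow> Hq (Mset m) = Fm m"
proof -
  assume lm: "length m = 7"
  let ?L = "Ls cols m"
  have lc: "length cols = length m" using lm by (simp add: cols_def)
  have W7: "w \<in> Wm m \<Longrightarrow> length w = 7" for w using lm by (simp add: Wm_def)
  have L: "set ?L = (\<lambda>w. (hs w, par w)) ` Wm m"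
    unfolding Ls_set[OF lc] using W7 hsc_hs by (auto intro!: image_cong)
  have A: "hs ` VM (Mset m) = set (remdups (map fst ?L))"
    using L by (simp add: VM_Mset[OF lm] image_image)
  have g: "g1 (Mset m) s = (\<forall>q \<in> set ?L. fst q = s \<longrightarrow> snd q = (s \<noteq> [False,False,False]))" for s
    unfolding g1_def L VM_Mset[OF lm] using W7 okv_char by auto
  have G: "{s \<in> set (remdups (map fst ?L)). g1 (Mset m) s} =
      set (filter (\<lambda>s. \<forall>q \<in> set ?L. fst q = s \<longrightarrow> snd q = (s \<noteq> [False,False,False])) (remdups (map fst ?L)))"
    unfolding g by auto
  show ?thesis
    unfolding Hq_def Fm_def Let_def G A
      distinct_card[OF distinct_remdups] distinct_card[OF distinct_filter[OF distinct_remdups]] ..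
qed

lemma Mset_card: "card (Mset m) = length (filter id m)"
proof -
  have "Mset m = Suc ` {j. j < length m \<and> m ! j}" by (auto simp: Mset_def)
  then have "card (Mset m) = card {j. j < length m \<and> m ! j}" by (simp add: card_image)
  then show ?thesis by (simp add: length_filter_conv_card)
qed

lemma Mset_bij: "bij_betw Mset {m. length m = 7} (Pow {1..7})"
proof (rule bij_betw_imageI)
  show "inj_on Mset {m. length m = 7}"
  proof (rule inj_onI)
    fix m m' assume "m \<in> {m. length m = 7}" "m' \<in> {m. length m = 7}" "Mset m = Mset m'"
    then show "m = m'"
    proof (intro nth_equalityI)
      fix i assume "i < length m"
      then show "m ! i = m' ! i"
        using Mset_mem[of i m] Mset_mem[of i m'] \<open>Mset m = Mset m'\<close> \<open>m \<in> {m. length m = 7}\<close>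
          \<open>m' \<in> {m. length m = 7}\<close> by auto
    qed simp
  qed
next
  show "Mset ` {m. length m = 7} = Pow {1..7}"
  proof (intro equalityI subsetI)
    fix M assume "M \<in> Mset ` {m. length m = 7}"
    then show "M \<in> Pow {1..7}" by (auto simp: Mset_def)
  next
    fix M :: "nat set" assume M: "M \<in> Pow {1..7}"
    have "M = Mset (map (\<lambda>j. Suc j \<in> M) [0..<7])"
    proof (intro equalityI subsetI)
      fix x assume "x \<in> M"
      with M have "x \<in> {1..7}" by blast
      then have "x = Suc (x - 1)" "x - 1 < 7" by auto
      with \<open>x \<in> M\<close> show "x \<in> Mset (map (\<lambda>j. Suc j \<in> M) [0..<7])"
        by (metis Mset_mem length_map length_upt minus_nat.diff_0 nth_map_upt plus_nat.add_0)
    next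
      fix x assume "x \<in> Mset (map (\<lambda>j. Suc j \<in> M) [0..<7])"
      then show "x \<in> M" by (auto simp: Mset_def)
    qed
    then show "M \<in> Mset ` {m. length m = 7}" by (intro rev_image_eqI) auto
  qed
qed

lemma sum_masks: "(\<Sum>M\<in>{M. M \<subseteq> {1..7} \<and> card M = t}. Hq M) =
   (\<Sum>m\<leftarrow>List.n_lists 7 [False, True]. if length (filter id m) = t then Fm m else 0)"
proof -
  have "(\<Sum>M\<in>{M. M \<subseteq> {1..7} \<and> card M = t}. Hq M) = (\<Sum>M\<in>{M \<in> Pow {1..7}. card M = t}. Hq M)"
    by (intro sum.cong) auto
  also have "\<dots> = (\<Sum>M\<in>Pow {1..7}. if card M = t then Hq M else 0)"
    by (rule sum.inter_filter) simp
  also have "\<dots> = (\<Sum>m\<in>{m. length m = 7}. if card (Mset m) = t then Hq (Mset m) else 0)"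
    by (rule sum.reindex_bij_betw[OF Mset_bij, symmetric])
  also have "\<dots> = (\<Sum>m\<in>{m. length m = 7}. if length (filter id m) = t then Fm m else 0)"
    by (intro sum.cong) (auto simp: Mset_card Hq_Fm)
  also have "{m :: bool list. length m = 7} = set (List.n_lists 7 [False, True])"
    by (auto simp: set_n_lists)
  also have "(\<Sum>m\<in>set (List.n_lists 7 [False, True]). if length (filter id m) = t then Fm m else 0) =
     (\<Sum>m\<leftarrow>List.n_lists 7 [False, True]. if length (filter id m) = t then Fm m else 0)"
    by (rule sum_list_distinct_conv_sum_set[symmetric]) (simp add: distinct_n_lists)
  finally show ?thesis .
qed

lemma fS_eq: "f_S 7 steane_gens steane_phi t = (1 / real (7 choose t)) *
   (\<Sum>m\<leftarrow>List.n_lists 7 [False, True]. if length (filter id m) = t then Fm m else 0)"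
  unfolding f_S_def ratio sum_masks[symmetric] Hq_def ..



lemma ch: "(7::nat) choose 0 = 1" "(7::nat) choose 1 = 7" "(7::nat) choose 2 = 21" "(7::nat) choose 3 = 35"
  "(7::nat) choose 4 = 35" "(7::nat) choose 5 = 21" "(7::nat) choose 6 = 7" "(7::nat) choose 7 = 1"
  by (simp_all add: numeral_eq_Suc)

lemma sums: "(\<Sum>m\<leftarrow>List.n_lists 7 [False, True]. if length (filter id m) = 0 then Fm m else 0) = 1"
  "(\<Sum>m\<leftarrow>List.n_lists 7 [False, True]. if length (filter id m) = 1 then Fm m else 0) = 7"
  "(\<Sum>m\<leftarrow>List.n_lists 7 [False, True]. if length (filter id m) = 2 then Fm m else 0) = 21 * 9 / 16"
  "(\<Sum>m\<leftarrow>List.n_lists 7 [False, True]. if length (filter id m) = 3 then Fm m else 0) = 35 * 5 / 16"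
  "(\<Sum>m\<leftarrow>List.n_lists 7 [False, True]. if length (filter id m) = 4 then Fm m else 0) = 35 * 5 / 64"
  "(\<Sum>m\<leftarrow>List.n_lists 7 [False, True]. if length (filter id m) = 5 then Fm m else 0) = 0"
  "(\<Sum>m\<leftarrow>List.n_lists 7 [False, True]. if length (filter id m) = 6 then Fm m else 0) = 0"
  "(\<Sum>m\<leftarrow>List.n_lists 7 [False, True]. if length (filter id m) = 7 then Fm m else 0) = 0"
  by (simp_all add: n7 Fm_def Let_def cols_def xl_def power2_eq_square)

theorem mainTheorem3:
  shows "f_S 7 steane_gens steane_phi 0 = 1 \<and> f_S 7 steane_gens steane_phi 1 = 1
    \<and> f_S 7 steane_gens steane_phi 2 = 9 / 16 \<and> f_S 7 steane_gens steane_phi 3 = 5 / 16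
    \<and> f_S 7 steane_gens steane_phi 4 = 5 / 64 \<and> f_S 7 steane_gens steane_phi 5 = 0
    \<and> f_S 7 steane_gens steane_phi 6 = 0 \<and> f_S 7 steane_gens steane_phi 7 = 0"
  unfolding fS_eq sums ch by simp


end
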